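(* Assume $\delta_1=\delta_2=\delta>0$. Suppose that $V(\cdot,p)$ is differentiable in $x$ and that the value function is attained by the admissible control $\pi^*(u\mid x,p)=G\big(u,1-V_x(x,p)\big)$, i.e. $V(x,p)=J(x,p;\pi^* )$ for all $(x,p)\in\mathbb R_+\times(0,1)$. Then for every $p\in(0,1)$, $$\lim_{x\to\infty}V(x,p)=\frac{f_\lambda(0)}{\delta}=\frac{\lambda\ln\big(\lambda(e^{\mathbf a/\lambda}-1)\big)}{\delta}.$$
   Context: Standing setup. Fix $\mu_1,\mu_2>0$, $\mu_1\ne\mu_2$, $\sigma>0$, $q_{12},q_{21}>0$, $\delta_1,\delta_2>0$, $\mathbf a>0$, $\lambda>0$. With a standard Brownian motion $\widehat W$, the belief $(p_t)$, $p_0=p\in(0,1)$, solves $dp_t=(q_{21}(1-p_t)-q_{12}p_t)dt+\frac{\mu_1-\mu_2}{\sigma}p_t(1-p_t)d\widehat W_t$ and stays in $(0,1)$; $\widehat\mu_t=\mu_2+(\mu_1-\mu_2)p_t$, $\widehat\delta_t=\delta_2+(\delta_1-\delta_2)p_t$, $\Lambda_t=\int_0^t\widehat\delta_sds$. For a distributional control (measurable map $(x,p)\mapsto\pi(\cdot\mid x,p)$ into probability densities on $[0,\mathbf a]$), $b^\pi(x,p)=\int_0^{\mathbf a}u\pi(u\mid x,p)du$, $\widehat{\mathcal H}^\pi_\lambda(x,p)=\int_0^{\mathbf a}(u-\lambda\ln\pi(u\mid x,p))\pi(u\mid x,p)du$; surplus $d\widehat X^\pi_t=(\widehat\mu_t-b^\pi(\widehat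 X^\pi_t,p_t))dt+\sigma d\widehat W_t$, $\widehat X^\pi_0=x$; ruin time $\widehat T^\pi_{x,p}=\inf\{t\ge0:\widehat X^\pi_t\le0\}$; $J(x,p;\pi)=\mathbb E_{x,p}[\int_0^{\widehat T^\pi_{x,p}}e^{-\Lambda_t}\widehat{\mathcal H}^\pi_\lambda(\widehat X^\pi_t,p_t)dt]$. Admissibility: normalization and measurability, unique strong solution of the surplus SDE for every initial state, and $\mathbb E_{x,p}[\int_0^{\widehat T^\pi_{x,p}}e^{-\Lambda_t}|\widehat{\mathcal H}^\pi_\lambda|dt]<\infty$. $V=\sup_{\pi}J$ over admissible $\pi$. Gibbs density $G(u,s)=\frac{se^{us/\lambda}}{\lambda(e^{\mathbf as/\lambda}-1)}$ ($s\ne0$), $G(u,0)=1/\mathbf a$. $f_\lambda(y)=\lambda\ln\frac{\lambda(e^{\mathbf a(1-y)/\lambda}-1)}{1-y}$ ($y\ne1$), $f_\lambda(1)=\lambda\ln\mathbf a$. *)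

theory Defs
  imports "HOL-Probability.Probability"
begin

definition gibbs :: "real \<Rightarrow> real \<Rightarrow> real \<Rightarrow> real \<Rightarrow> real" where
  "gibbs lam a u s =
     (if s = 0 then 1 / a else s * exp (u * s / lam) / (lam * (exp (a * s / lam) - 1)))"

definition f_lam :: "real \<Rightarrow> real \<Rightarrow> real \<Rightarrow> real" where
  "f_lam lam a y =
     (if y = 1 then lam * ln a else lam * ln (lam * (exp (a * (1 - y) / lam) - 1) / (1 - y)))"

definition is_filtration :: "'w measure \<Rightarrow> (real \<Rightarrow> 'w measure) \<Rightarrow> bool" where
  "is_filtration M F \<longleftrightarrow>
     (\<forall>t. space (F t) = space M \<and> sets (F t) \<subseteq> sets M) \<and>
     (\<forall>s t. s \<le> t \<longrightarrow> sets (F s) \<subseteq> sets (F t))"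

definition std_BM :: "'w measure \<Rightarrow> (real \<Rightarrow> 'w measure) \<Rightarrow> (real \<Rightarrow> 'w \<Rightarrow> real) \<Rightarrow> bool" where
  "std_BM M F W \<longleftrightarrow> prob_space M \<and> is_filtration M F \<and>
     (\<forall>\<omega>\<in>space M. W 0 \<omega> = 0 \<and> continuous_on {0..} (\<lambda>t. W t \<omega>)) \<and>
     (\<forall>t\<ge>0. W t \<in> borel_measurable (F t)) \<and>
     (\<forall>s t. 0 \<le> s \<and> s < t \<longrightarrow>
        distributed M lborel (\<lambda>\<omega>. W t \<omega> - W s \<omega>) (normal_density 0 (sqrt (t - s))) \<and>
        (\<forall>A\<in>sets (F s). \<forall>B\<in>sets borel.
           measure M (A \<inter> ((\<lambda>\<omega>. W t \<omega> - W s \<omega>) -` B \<inter> space M))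
             = measure M A * measure M ((\<lambda>\<omega>. W t \<omega> - W s \<omega>) -` B \<inter> space M)))"

definition ito_sum :: "(real \<Rightarrow> 'w \<Rightarrow> real) \<Rightarrow> (real \<Rightarrow> 'w \<Rightarrow> real) \<Rightarrow> real \<Rightarrow> nat \<Rightarrow> 'w \<Rightarrow> real" where
  "ito_sum H W t n \<omega> =
     (\<Sum>k<n. H (t * real k / real n) \<omega> * (W (t * real (Suc k) / real n) \<omega> - W (t * real k / real n) \<omega>))"

text \<open>I is (a version of) the Ito integral of the continuous adapted H against W over [0,t]:
  the limit in probability of the left Riemann sums.\<close>
definition is_ito_integral ::
  "'w measure \<Rightarrow> (real \<Rightarrow> 'w \<Rightarrow> real) \<Rightarrow> (real \<Rightarrow> 'w \<Rightarrow> real) \<Rightarrow> real \<Rightarrow> ('w \<Rightarrow> real) \<Rightarrow> bool" where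
  "is_ito_integral M H W t I \<longleftrightarrow>
     (\<forall>\<epsilon>>0. (\<lambda>n. measure M {\<omega>\<in>space M. \<bar>ito_sum H W t n \<omega> - I \<omega>\<bar> > \<epsilon>}) \<longlonglongrightarrow> 0)"

definition belief_process ::
  "'w measure \<Rightarrow> (real \<Rightarrow> 'w measure) \<Rightarrow> (real \<Rightarrow> 'w \<Rightarrow> real) \<Rightarrow>
   real \<Rightarrow> real \<Rightarrow> real \<Rightarrow> real \<Rightarrow> real \<Rightarrow> real \<Rightarrow> (real \<Rightarrow> 'w \<Rightarrow> real) \<Rightarrow> bool" where
  "belief_process M F W mu1 mu2 sig q12 q21 p0 P \<longleftrightarrow>
     (\<forall>\<omega>\<in>space M. P 0 \<omega> = p0 \<and> continuous_on {0..} (\<lambda>t. P t \<omega>) \<and>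
        (\<forall>t\<ge>0. P t \<omega> \<in> {0<..<1})) \<and>
     (\<forall>t\<ge>0. P t \<in> borel_measurable (F t)) \<and>
     (\<forall>t\<ge>0. is_ito_integral M (\<lambda>s \<omega>. (mu1 - mu2) / sig * P s \<omega> * (1 - P s \<omega>)) W t
        (\<lambda>\<omega>. P t \<omega> - p0 - (LINT s:{0..t}|lborel. q21 * (1 - P s \<omega>) - q12 * P s \<omega>)))"

text \<open>A control is pi u x p = density at u in [0,a] given state (x,p).\<close>
definition control_ok :: "real \<Rightarrow> (real \<Rightarrow> real \<Rightarrow> real \<Rightarrow> real) \<Rightarrow> bool" where
  "control_ok a \<pi> \<longleftrightarrow>
     (\<lambda>z. \<pi> (fst z) (fst (snd z)) (snd (snd z))) \<in> borel_measurable borel \<and>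
     (\<forall>x p. p \<in> {0<..<1} \<longrightarrow>
        (\<forall>u\<in>{0..a}. 0 \<le> \<pi> u x p) \<and>
        set_integrable lborel {0..a} (\<lambda>u. \<pi> u x p) \<and>
        (LINT u:{0..a}|lborel. \<pi> u x p) = 1)"

definition bctl :: "real \<Rightarrow> (real \<Rightarrow> real \<Rightarrow> real \<Rightarrow> real) \<Rightarrow> real \<Rightarrow> real \<Rightarrow> real" where
  "bctl a \<pi> x p = (LINT u:{0..a}|lborel. u * \<pi> u x p)"

definition Hctl :: "real \<Rightarrow> real \<Rightarrow> (real \<Rightarrow> real \<Rightarrow> real \<Rightarrow> real) \<Rightarrow> real \<Rightarrow> real \<Rightarrow> real" where
  "Hctl lam a \<pi> x p = (LINT u:{0..a}|lborel. (u - lam * ln (\<pi> u x p)) * \<pi> u x p)"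

text \<open>|H|, taken to be infinite when the defining integral does not exist (H = -infinity).\<close>
definition Habs :: "real \<Rightarrow> real \<Rightarrow> (real \<Rightarrow> real \<Rightarrow> real \<Rightarrow> real) \<Rightarrow> real \<Rightarrow> real \<Rightarrow> ennreal" where
  "Habs lam a \<pi> x p =
     (if set_integrable lborel {0..a} (\<lambda>u. (u - lam * ln (\<pi> u x p)) * \<pi> u x p)
      then ennreal \<bar>Hctl lam a \<pi> x p\<bar> else \<top>)"

definition surplus_sol ::
  "'w measure \<Rightarrow> (real \<Rightarrow> 'w measure) \<Rightarrow> (real \<Rightarrow> 'w \<Rightarrow> real) \<Rightarrow> real \<Rightarrow> real \<Rightarrow> real \<Rightarrow> real \<Rightarrow>
   (real \<Rightarrow> 'w \<Rightarrow> real) \<Rightarrow> (real \<Rightarrow> real \<Rightarrow> real \<Rightarrow> real) \<Rightarrow> real \<Rightarrow> (real \<Rightarrow> 'w \<Rightarrow> real) \<Rightarrow> bool" where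
  "surplus_sol M F W mu1 mu2 sig a P \<pi> x X \<longleftrightarrow>
     (\<forall>t\<ge>0. X t \<in> borel_measurable (F t)) \<and>
     (\<forall>\<omega>\<in>space M. continuous_on {0..} (\<lambda>t. X t \<omega>)) \<and>
     (AE \<omega> in M. \<forall>t\<ge>0. X t \<omega> =
        x + (LINT s:{0..t}|lborel. (mu2 + (mu1 - mu2) * P s \<omega>) - bctl a \<pi> (X s \<omega>) (P s \<omega>))
          + sig * W t \<omega>)"

definition ruin_time :: "(real \<Rightarrow> 'w \<Rightarrow> real) \<Rightarrow> 'w \<Rightarrow> ereal" where
  "ruin_time X \<omega> = Inf {ereal t | t. 0 \<le> t \<and> X t \<omega> \<le> 0}"

definition disc :: "real \<Rightarrow> real \<Rightarrow> (real \<Rightarrow> 'w \<Rightarrow> real) \<Rightarrow> real \<Rightarrow> 'w \<Rightarrow> real" where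
  "disc d1 d2 P t \<omega> = exp (- (LINT s:{0..t}|lborel. d2 + (d1 - d2) * P s \<omega>))"

definition alive :: "(real \<Rightarrow> 'w \<Rightarrow> real) \<Rightarrow> 'w \<Rightarrow> real set" where
  "alive X \<omega> = {t. 0 \<le> t \<and> ereal t < ruin_time X \<omega>}"

definition Jobj ::
  "'w measure \<Rightarrow> (real \<Rightarrow> 'w measure) \<Rightarrow> (real \<Rightarrow> 'w \<Rightarrow> real) \<Rightarrow> real \<Rightarrow> real \<Rightarrow> real \<Rightarrow>
   real \<Rightarrow> real \<Rightarrow> real \<Rightarrow> real \<Rightarrow> (real \<Rightarrow> real \<Rightarrow> 'w \<Rightarrow> real) \<Rightarrow>
   (real \<Rightarrow> real \<Rightarrow> real \<Rightarrow> real) \<Rightarrow> real \<Rightarrow> real \<Rightarrow> real" where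
  "Jobj M F W mu1 mu2 sig d1 d2 a lam Pf \<pi> x p =
     (let X = (SOME X. surplus_sol M F W mu1 mu2 sig a (Pf p) \<pi> x X) in
      \<integral>\<omega>. (LINT t:alive X \<omega>|lborel. disc d1 d2 (Pf p) t \<omega> * Hctl lam a \<pi> (X t \<omega>) (Pf p t \<omega>)) \<partial>M)"

definition admissible ::
  "'w measure \<Rightarrow> (real \<Rightarrow> 'w measure) \<Rightarrow> (real \<Rightarrow> 'w \<Rightarrow> real) \<Rightarrow> real \<Rightarrow> real \<Rightarrow> real \<Rightarrow>
   real \<Rightarrow> real \<Rightarrow> real \<Rightarrow> real \<Rightarrow> (real \<Rightarrow> real \<Rightarrow> 'w \<Rightarrow> real) \<Rightarrow>
   (real \<Rightarrow> real \<Rightarrow> real \<Rightarrow> real) \<Rightarrow> bool" where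
  "admissible M F W mu1 mu2 sig d1 d2 a lam Pf \<pi> \<longleftrightarrow>
     control_ok a \<pi> \<and>
     (\<forall>x\<ge>0. \<forall>p\<in>{0<..<1}.
        (\<exists>X. surplus_sol M F W mu1 mu2 sig a (Pf p) \<pi> x X) \<and>
        (\<forall>X Y. surplus_sol M F W mu1 mu2 sig a (Pf p) \<pi> x X \<longrightarrow>
               surplus_sol M F W mu1 mu2 sig a (Pf p) \<pi> x Y \<longrightarrow>
               (AE \<omega> in M. \<forall>t\<ge>0. X t \<omega> = Y t \<omega>)) \<and>
        (let X = (SOME X. surplus_sol M F W mu1 mu2 sig a (Pf p) \<pi> x X) in
          (\<integral>\<^sup>+\<omega>. (\<integral>\<^sup>+t. indicator (alive X \<omega>) t * ennreal (disc d1 d2 (Pf p) t \<omega>)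
                       * Habs lam a \<pi> (X t \<omega>) (Pf p t \<omega>) \<partial>lborel) \<partial>M) < \<top>))"

definition value_fn ::
  "'w measure \<Rightarrow> (real \<Rightarrow> 'w measure) \<Rightarrow> (real \<Rightarrow> 'w \<Rightarrow> real) \<Rightarrow> real \<Rightarrow> real \<Rightarrow> real \<Rightarrow>
   real \<Rightarrow> real \<Rightarrow> real \<Rightarrow> real \<Rightarrow> (real \<Rightarrow> real \<Rightarrow> 'w \<Rightarrow> real) \<Rightarrow> real \<Rightarrow> real \<Rightarrow> ereal" where
  "value_fn M F W mu1 mu2 sig d1 d2 a lam Pf x p =
     (SUP \<pi>\<in>{\<pi>. admissible M F W mu1 mu2 sig d1 d2 a lam Pf \<pi>}.
        ereal (Jobj M F W mu1 mu2 sig d1 d2 a lam Pf \<pi> x p))"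

end

theory Submission
  imports Defs
begin


lemma Z_pos: "(lam::real) > 0 \<Longrightarrow> a > 0 \<Longrightarrow> lam * (exp (a / lam) - 1) > 0"
  by (simp add: mult_pos_pos)

lemma gibbs1: "gibbs lam a u 1 = exp (u / lam) / (lam * (exp (a / lam) - 1))"
  by (simp add: gibbs_def)

lemma gibbs_pos:
  assumes "(lam::real) > 0" "a > 0" shows "gibbs lam a u s > 0"
proof (cases "s = 0")
  case True then show ?thesis using assms by (simp add: gibbs_def)
next
  case False
  have "s / (lam * (exp (a * s / lam) - 1)) > 0"
  proof (cases "s > 0")
    case True
    then have "a * s / lam > 0" using assms by simp
    then have "exp (a * s / lam) > 1" by simp
    then show ?thesis using True assms by simp
  next
    case f: False
    then have "s < 0" using False by simp
    then have "a * s / lam < 0" using assms by (simp add: divide_neg_pos mult_pos_neg)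
    then have "exp (a * s / lam) < 1" by simp
    then have "lam * (exp (a * s / lam) - 1) < 0" using assms by (simp add: mult_pos_neg)
    then show ?thesis using \<open>s < 0\<close> by (simp add: divide_neg_neg)
  qed
  then have "s * exp (u * s / lam) / (lam * (exp (a * s / lam) - 1)) > 0"
    by (metis mult.commute exp_gt_zero mult_pos_pos times_divide_eq_right)
  then show ?thesis using False by (simp add: gibbs_def)
qed

lemma gibbs_cont:
  assumes "(lam::real) > 0" "a > 0"
  shows "continuous_on A (\<lambda>u. gibbs lam a u s)"
proof (cases "s = 0")
  case False
  then have "exp (a * s / lam) \<noteq> 1" using assms by simp
  then have "lam * (exp (a * s / lam) - 1) \<noteq> 0" using assms by simp
  then show ?thesis unfolding gibbs_def using False by (auto intro!: continuous_intros)
qed (simp add: gibbs_def)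

lemma gibbs_H_cont:
  assumes "(lam::real) > 0" "a > 0"
  shows "continuous_on A (\<lambda>u. (u - lam * ln (gibbs lam a u s)) * gibbs lam a u s)"
  using gibbs_pos[OF assms] by (auto intro!: continuous_intros gibbs_cont[OF assms] simp: less_imp_neq[symmetric])

lemma gibbs1_int:
  assumes "(lam::real) > 0" "a > 0"
  shows "(LINT u:{0..a}|lborel. gibbs lam a u 1) = 1"
proof -
  have e: "exp (a / lam) - 1 > 0" using assms by simp
  have "(LBINT u=(0::real)..a. gibbs lam a u 1) = exp (a/lam) / (exp (a / lam) - 1) - exp (0/lam) / (exp (a / lam) - 1)"
  proof (rule interval_integral_FTC_finite)
    show "continuous_on {min 0 a..max 0 a} (\<lambda>u. gibbs lam a u 1)" by (rule gibbs_cont[OF assms])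
    fix x
    show "((\<lambda>u. exp (u/lam) / (exp (a / lam) - 1)) has_vector_derivative gibbs lam a x 1) (at x within {min 0 a..max 0 a})"
    proof -
      have "((\<lambda>u. exp (u/lam) / (exp (a / lam) - 1)) has_real_derivative (exp (x/lam) * (1/lam) / (exp (a / lam) - 1))) (at x within {min 0 a..max 0 a})"
        using assms by (auto intro!: derivative_eq_intros)
      moreover have "exp (x/lam) * (1/lam) / (exp (a / lam) - 1) = gibbs lam a x 1"
        using assms by (simp add: gibbs1)
      ultimately show ?thesis by (simp add: has_real_derivative_iff_has_vector_derivative)
    qed
  qed
  also have "\<dots> = 1" using e assms by (simp flip: diff_divide_distrib)
  finally show ?thesis using assms by (simp add: interval_integral_Icc)
qed

lemma ln_gibbs1:
  assumes "(lam::real) > 0" "a > 0"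
  shows "ln (gibbs lam a u 1) = u / lam - ln (lam * (exp (a / lam) - 1))"
  using Z_pos[OF assms] assms by (simp add: gibbs1 ln_div)

lemma H_gibbs1_eq:
  assumes "(lam::real) > 0" "a > 0"
  shows "(u - lam * ln (gibbs lam a u 1)) * gibbs lam a u 1 = lam * ln (lam * (exp (a / lam) - 1)) * gibbs lam a u 1"
  using assms by (simp add: ln_gibbs1 algebra_simps)

lemma gibbs_pointwise:
  assumes "(lam::real) > 0" "a > 0" "q \<ge> 0"
  shows "(u - lam * ln q) * q \<le> lam * ln (lam * (exp (a / lam) - 1)) * q + lam * (gibbs lam a u 1 - q)"
proof (cases "q = 0")
  case True then show ?thesis using gibbs_pos[OF assms(1,2), of u 1] assms by simp
next
  case False
  then have q: "q > 0" using assms by simp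
  have g: "gibbs lam a u 1 > 0" by (rule gibbs_pos[OF assms(1,2)])
  have "ln (gibbs lam a u 1 / q) \<le> gibbs lam a u 1 / q - 1"
    by (rule ln_le_minus_one) (use g q in simp)
  then have "ln (gibbs lam a u 1) - ln q \<le> gibbs lam a u 1 / q - 1"
    using g q by (simp add: ln_div)
  then have "u / lam - ln (lam * (exp (a / lam) - 1)) - ln q \<le> gibbs lam a u 1 / q - 1"
    using ln_gibbs1[OF assms(1,2)] by simp
  then have "lam * q * (u / lam - ln (lam * (exp (a / lam) - 1)) - ln q) \<le> lam * q * (gibbs lam a u 1 / q - 1)"
    using assms q by (intro mult_left_mono) auto
  then show ?thesis using assms q by (simp add: algebra_simps)
qed

lemma gibbs_ineq:
  assumes "(lam::real) > 0" "a > 0"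
    and i1: "set_integrable lborel {0..a} q" and i2: "(LINT u:{0..a}|lborel. q u) = 1"
    and nn: "\<And>u. u \<in> {0..a} \<Longrightarrow> q u \<ge> 0"
    and i3: "set_integrable lborel {0..a} (\<lambda>u. (u - lam * ln (q u)) * q u)"
  shows "(LINT u:{0..a}|lborel. (u - lam * ln (q u)) * q u) \<le> lam * ln (lam * (exp (a / lam) - 1))"
proof -
  let ?c = "lam * ln (lam * (exp (a / lam) - 1))"
  have ig: "set_integrable lborel {0..a} (\<lambda>u. gibbs lam a u 1)"
    by (rule borel_integrable_atLeastAtMost'[OF gibbs_cont[OF assms(1,2)]])
  have i4: "set_integrable lborel {0..a} (\<lambda>u. ?c * q u + lam * (gibbs lam a u 1 - q u))"
    using i1 ig by (intro set_integral_add set_integrable_mult_right set_integral_diff) auto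
  have "(LINT u:{0..a}|lborel. (u - lam * ln (q u)) * q u) \<le> (LINT u:{0..a}|lborel. ?c * q u + lam * (gibbs lam a u 1 - q u))"
    by (rule set_integral_mono[OF i3 i4]) (use gibbs_pointwise[OF assms(1,2) nn] in auto)
  also have "\<dots> = ?c * (LINT u:{0..a}|lborel. q u) + lam * ((LINT u:{0..a}|lborel. gibbs lam a u 1) - (LINT u:{0..a}|lborel. q u))"
    using i1 ig by (simp add: set_integral_add set_integrable_mult_right set_integral_diff set_integral_mult_right)
  also have "\<dots> = ?c" using i2 gibbs1_int[OF assms(1,2)] by simp
  finally show ?thesis .
qed

lemma Hctl_le:
  assumes "(lam::real) > 0" "a > 0" "control_ok a \<pi>" "p \<in> {0<..<1}"
    and eq: "\<And>u. u \<in> {0..a} \<Longrightarrow> \<pi> u x p = gibbs lam a u s"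
  shows "Hctl lam a \<pi> x p \<le> lam * ln (lam * (exp (a / lam) - 1))"
proof -
  have "Hctl lam a \<pi> x p = (LINT u:{0..a}|lborel. (u - lam * ln (gibbs lam a u s)) * gibbs lam a u s)"
    unfolding Hctl_def by (rule set_lebesgue_integral_cong) (auto simp: eq)
  also have "\<dots> \<le> lam * ln (lam * (exp (a / lam) - 1))"
  proof (rule gibbs_ineq[OF assms(1,2)])
    show "set_integrable lborel {0..a} (\<lambda>u. gibbs lam a u s)"
      by (rule borel_integrable_atLeastAtMost'[OF gibbs_cont[OF assms(1,2)]])
    show "set_integrable lborel {0..a} (\<lambda>u. (u - lam * ln (gibbs lam a u s)) * gibbs lam a u s)"
      by (rule borel_integrable_atLeastAtMost'[OF gibbs_H_cont[OF assms(1,2)]])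
    show "0 \<le> gibbs lam a u s" for u using gibbs_pos[OF assms(1,2)] less_imp_le by blast
    have "(LINT u:{0..a}|lborel. gibbs lam a u s) = (LINT u:{0..a}|lborel. \<pi> u x p)"
      by (rule set_lebesgue_integral_cong) (auto simp: eq)
    also have "\<dots> = 1" using assms(3,4) unfolding control_ok_def by auto
    finally show "(LINT u:{0..a}|lborel. gibbs lam a u s) = 1" .
  qed
  finally show ?thesis .
qed

lemma bctl_le:
  assumes "control_ok a \<pi>" "p \<in> {0<..<1}" "a > 0"
  shows "bctl a \<pi> x p \<le> a"
proof (cases "set_integrable lborel {0..a} (\<lambda>u. u * \<pi> u x p)")
  case True
  have i: "set_integrable lborel {0..a} (\<lambda>u. \<pi> u x p)" and n: "\<forall>u\<in>{0..a}. 0 \<le> \<pi> u x p"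
    and one: "(LINT u:{0..a}|lborel. \<pi> u x p) = 1"
    using assms unfolding control_ok_def by auto
  have "bctl a \<pi> x p \<le> (LINT u:{0..a}|lborel. a * \<pi> u x p)"
    unfolding bctl_def
    by (rule set_integral_mono[OF True]) (use i n in \<open>auto intro!: set_integrable_mult_right mult_right_mono\<close>)
  also have "\<dots> = a" using one i by (simp add: set_integral_mult_right)
  finally show ?thesis .
next
  case False
  then have "bctl a \<pi> x p = 0"
    unfolding bctl_def set_lebesgue_integral_def set_integrable_def
    by (simp add: not_integrable_integral_eq)
  then show ?thesis using assms by simp
qed

definition pic :: "real \<Rightarrow> real \<Rightarrow> real \<Rightarrow> real \<Rightarrow> real \<Rightarrow> real" where
  "pic lam a u x p = gibbs lam a u 1"

lemma Hctl_pic: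
  assumes "(lam::real) > 0" "a > 0"
  shows "Hctl lam a (pic lam a) x p = lam * ln (lam * (exp (a / lam) - 1))"
    and "set_integrable lborel {0..a} (\<lambda>u. (u - lam * ln (pic lam a u x p)) * pic lam a u x p)"
proof -
  show "set_integrable lborel {0..a} (\<lambda>u. (u - lam * ln (pic lam a u x p)) * pic lam a u x p)"
    unfolding pic_def by (rule borel_integrable_atLeastAtMost'[OF gibbs_H_cont[OF assms(1,2)]])
  have ig: "set_integrable lborel {0..a} (\<lambda>u. gibbs lam a u 1)"
    by (rule borel_integrable_atLeastAtMost'[OF gibbs_cont[OF assms(1,2)]])
  have "Hctl lam a (pic lam a) x p = (LINT u:{0..a}|lborel. lam * ln (lam * (exp (a / lam) - 1)) * gibbs lam a u 1)"
    unfolding Hctl_def pic_def by (simp add: H_gibbs1_eq[OF assms])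
  also have "\<dots> = lam * ln (lam * (exp (a / lam) - 1))"
    using ig gibbs1_int[OF assms] by (simp add: set_integral_mult_right)
  finally show "Hctl lam a (pic lam a) x p = lam * ln (lam * (exp (a / lam) - 1))" .
qed

lemma control_ok_pic:
  assumes "(lam::real) > 0" "a > 0"
  shows "control_ok a (pic lam a)"
  unfolding control_ok_def
proof (intro conjI allI impI)
  show "(\<lambda>z. pic lam a (fst z) (fst (snd z)) (snd (snd z))) \<in> borel_measurable borel"
    unfolding pic_def gibbs1 using Z_pos[OF assms] assms by (intro borel_measurable_continuous_onI continuous_intros) auto
  fix x p :: real
  show "\<forall>u\<in>{0..a}. 0 \<le> pic lam a u x p" using gibbs_pos[OF assms] unfolding pic_def by (simp add: less_imp_le)
  show "set_integrable lborel {0..a} (\<lambda>u. pic lam a u x p)"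
    unfolding pic_def by (rule borel_integrable_atLeastAtMost'[OF gibbs_cont[OF assms(1,2)]])
  show "(LINT u:{0..a}|lborel. pic lam a u x p) = 1"
    unfolding pic_def by (rule gibbs1_int[OF assms])
qed



lemma filt_meas:
  assumes "is_filtration M F" "f \<in> borel_measurable (F t)"
  shows "f \<in> borel_measurable M"
  using assms by (intro measurable_from_subalg[of M "F t"]) (auto simp: subalgebra_def is_filtration_def)

lemma filt_mono:
  assumes "is_filtration M F" "s \<le> t" "f \<in> borel_measurable (F s)"
  shows "f \<in> borel_measurable (F t)"
  using assms by (intro measurable_from_subalg[of "F t" "F s"]) (auto simp: subalgebra_def is_filtration_def)

lemma floor_approx:
  fixes s :: real
  shows "(\<lambda>k. real_of_int \<lfloor>s * real (Suc k)\<rfloor> / real (Suc k)) \<longlonglongrightarrow> s"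
proof (rule tendsto_sandwich[where f="\<lambda>k. s - 1 / real (Suc k)" and h="\<lambda>k. s"])
  show "\<forall>\<^sub>F k in sequentially. s - 1 / real (Suc k) \<le> real_of_int \<lfloor>s * real (Suc k)\<rfloor> / real (Suc k)"
  proof (intro always_eventually allI)
    fix k
    have "s * real (Suc k) - 1 \<le> real_of_int \<lfloor>s * real (Suc k)\<rfloor>" by linarith
    moreover have n: "real (Suc k) > 0" by simp
    moreover have "(s - 1 / real (Suc k)) * real (Suc k) = s * real (Suc k) - 1"
      using n by (simp add: field_simps)
    ultimately show "s - 1 / real (Suc k) \<le> real_of_int \<lfloor>s * real (Suc k)\<rfloor> / real (Suc k)"
      by (simp add: pos_le_divide_eq)
  qed
  show "\<forall>\<^sub>F k in sequentially. real_of_int \<lfloor>s * real (Suc k)\<rfloor> / real (Suc k) \<le> s"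
  proof (intro always_eventually allI)
    fix k
    have "real_of_int \<lfloor>s * real (Suc k)\<rfloor> \<le> s * real (Suc k)" by linarith
    then show "real_of_int \<lfloor>s * real (Suc k)\<rfloor> / real (Suc k) \<le> s"
      by (simp add: field_simps)
  qed
  have "(\<lambda>k. s - 1 / real (Suc k)) \<longlonglongrightarrow> s - 0"
    by (intro tendsto_intros LIMSEQ_inverse_real_of_nat[unfolded inverse_eq_divide])
  then show "(\<lambda>k. s - 1 / real (Suc k)) \<longlonglongrightarrow> s" by simp
qed simp

lemma floor_approx_bounds:
  fixes s :: real
  assumes "0 \<le> s"
  shows "0 \<le> real_of_int \<lfloor>s * real (Suc k)\<rfloor> / real (Suc k)"
    "real_of_int \<lfloor>s * real (Suc k)\<rfloor> / real (Suc k) \<le> s"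
proof -
  show "0 \<le> real_of_int \<lfloor>s * real (Suc k)\<rfloor> / real (Suc k)" using assms by simp
  have "real_of_int \<lfloor>s * real (Suc k)\<rfloor> \<le> s * real (Suc k)" by linarith
  then show "real_of_int \<lfloor>s * real (Suc k)\<rfloor> / real (Suc k) \<le> s"
    by (simp add: field_simps)
qed

lemma joint_meas:
  fixes Q :: "real \<Rightarrow> 'w \<Rightarrow> real"
  assumes meas: "\<And>s. Q s \<in> borel_measurable N"
    and cont: "\<And>\<omega>. \<omega> \<in> space N \<Longrightarrow> continuous_on UNIV (\<lambda>s. Q s \<omega>)"
  shows "(\<lambda>z. Q (snd z) (fst z)) \<in> borel_measurable (N \<Otimes>\<^sub>M lborel)"
proof (rule borel_measurable_LIMSEQ_real)
  let ?u = "\<lambda>k z. Q (real_of_int \<lfloor>snd z * real (Suc k)\<rfloor> / real (Suc k)) (fst z)"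
  show "?u k \<in> borel_measurable (N \<Otimes>\<^sub>M lborel)" for k
  proof (rule measurable_compose_countable[where f="\<lambda>i z. Q (real_of_int i / real (Suc k)) (fst z)"])
    show "(\<lambda>z. Q (real_of_int i / real (Suc k)) (fst z)) \<in> borel_measurable (N \<Otimes>\<^sub>M lborel)" for i
      using meas by measurable
    show "(\<lambda>z. \<lfloor>snd z * real (Suc k)\<rfloor>) \<in> N \<Otimes>\<^sub>M lborel \<rightarrow>\<^sub>M count_space UNIV"
      by measurable
  qed
  fix z :: "'w \<times> real" assume z: "z \<in> space (N \<Otimes>\<^sub>M lborel)"
  then have "fst z \<in> space N" by (auto simp: space_pair_measure mem_Times_iff)
  then have "isCont (\<lambda>s. Q s (fst z)) (snd z)"
    using cont continuous_on_eq_continuous_at open_UNIV by blast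
  then show "(\<lambda>k. ?u k z) \<longlonglongrightarrow> Q (snd z) (fst z)"
    using floor_approx isCont_tendsto_compose by blast
qed

lemma ruin_nonneg: "0 \<le> ruin_time X \<omega>"
  unfolding ruin_time_def by (auto intro!: Inf_greatest)

lemma ruin_le: "0 \<le> t \<Longrightarrow> X t \<omega> \<le> 0 \<Longrightarrow> ruin_time X \<omega> \<le> ereal t"
  unfolding ruin_time_def by (auto intro!: Inf_lower)

lemma alive_pos: "t \<in> alive X \<omega> \<Longrightarrow> X t \<omega> > 0"
  unfolding alive_def using ruin_le[of t X \<omega>] by force

lemma ruin_char:
  assumes cont: "continuous_on {0..} (\<lambda>t. X t \<omega>)" and t: "0 \<le> t"
  shows "ereal t < ruin_time X \<omega> \<longleftrightarrow> (\<forall>s\<in>{0..t}. X s \<omega> > 0)"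
proof
  assume "ereal t < ruin_time X \<omega>"
  show "\<forall>s\<in>{0..t}. X s \<omega> > 0"
  proof
    fix s assume s: "s \<in> {0..t}"
    show "X s \<omega> > 0"
    proof (rule ccontr)
      assume "\<not> X s \<omega> > 0"
      then have "ruin_time X \<omega> \<le> ereal s" using s by (intro ruin_le) auto
      also have "\<dots> \<le> ereal t" using s by simp
      finally show False using \<open>ereal t < ruin_time X \<omega>\<close> by simp
    qed
  qed
next
  assume pos: "\<forall>s\<in>{0..t}. X s \<omega> > 0"
  then have "X t \<omega> > 0" using t by auto
  have "continuous (at t within {0..}) (\<lambda>t. X t \<omega>)"
    using cont t continuous_on_eq_continuous_within by auto
  then obtain d where d: "d > 0" "\<And>s. s \<in> {0..} \<Longrightarrow> dist s t < d \<Longrightarrow> dist (X s \<omega>) (X t \<omega>) < X t \<omega>"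
    using \<open>X t \<omega> > 0\<close> unfolding continuous_within_eps_delta by blast
  have "ereal (t + d) \<le> ruin_time X \<omega>"
    unfolding ruin_time_def
  proof (rule Inf_greatest, clarsimp)
    fix s assume s: "0 \<le> s" "X s \<omega> \<le> 0"
    show "t + d \<le> s"
    proof (rule ccontr)
      assume "\<not> t + d \<le> s"
      moreover have "\<not> s \<le> t" using pos s by force
      ultimately have "dist s t < d" by (simp add: dist_real_def)
      then have "dist (X s \<omega>) (X t \<omega>) < X t \<omega>" using d s by auto
      then show False using s by (simp add: dist_real_def)
    qed
  qed
  moreover have "ereal t < ereal (t + d)" using d(1) by simp
  ultimately show "ereal t < ruin_time X \<omega>" by (rule order_less_le_trans[rotated])
qed

lemma ruin_meas:
  assumes meas: "\<And>t. 0 \<le> t \<Longrightarrow> X t \<in> borel_measurable M"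
    and cont: "\<And>\<omega>. \<omega> \<in> space M \<Longrightarrow> continuous_on {0..} (\<lambda>t. X t \<omega>)"
  shows "ruin_time X \<in> borel_measurable M"
proof (rule borel_measurableI_greater)
  fix y :: ereal
  show "{\<omega> \<in> space M. y < ruin_time X \<omega>} \<in> sets M"
  proof (cases y)
    case (real t)
    show ?thesis
    proof (cases "t < 0")
      case True
      have "y < ruin_time X \<omega>" for \<omega>
      proof -
        have "y < 0" using True real by simp
        also have "0 \<le> ruin_time X \<omega>" by (rule ruin_nonneg)
        finally show "y < ruin_time X \<omega>" .
      qed
      then have "{\<omega> \<in> space M. y < ruin_time X \<omega>} = space M" by simp
      then show ?thesis by simp
    next
      case False
      let ?q = "\<lambda>k (i::int). max 0 (min t (real_of_int i / real (Suc k)))"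
      let ?P = "\<lambda>\<omega>. \<exists>n::nat. \<forall>k::nat. \<forall>i::int. 1 / real (Suc n) \<le> X (?q k i) \<omega>"
      have qin: "0 \<le> ?q k i \<and> ?q k i \<le> t" for k i using False by auto
      have eq: "{\<omega> \<in> space M. y < ruin_time X \<omega>} = {\<omega> \<in> space M. ?P \<omega>}"
      proof (rule Collect_cong, rule conj_cong, rule refl)
        fix \<omega> assume om: "\<omega> \<in> space M"
        have "y < ruin_time X \<omega> \<longleftrightarrow> (\<forall>s\<in>{0..t}. X s \<omega> > 0)"
          using ruin_char[where X=X and \<omega>=\<omega> and t=t, OF cont[OF om]] False real by simp
        also have "\<dots> \<longleftrightarrow> ?P \<omega>"
        proof
          assume pos: "\<forall>s\<in>{0..t}. X s \<omega> > 0"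
          have "\<exists>s0\<in>{0..t}. \<forall>s\<in>{0..t}. X s0 \<omega> \<le> X s \<omega>"
            using False by (intro continuous_attains_inf continuous_on_subset[OF cont[OF om]]) auto
          then obtain s0 where s0: "s0 \<in> {0..t}" "\<And>s. s \<in> {0..t} \<Longrightarrow> X s0 \<omega> \<le> X s \<omega>" by blast
          have "X s0 \<omega> > 0" using pos s0 by auto
          then obtain n where n: "inverse (real (Suc n)) < X s0 \<omega>" using reals_Archimedean by blast
          show "?P \<omega>"
          proof (intro exI allI)
            fix k :: nat and i :: int
            have "X s0 \<omega> \<le> X (?q k i) \<omega>" using s0 qin[where k=k and i=i] by auto
            then show "1 / real (Suc n) \<le> X (?q k i) \<omega>" using n by (simp add: inverse_eq_divide)
          qed
        next
          assume "?P \<omega>"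
          then obtain n where n: "\<And>k i. 1 / real (Suc n) \<le> X (?q k i) \<omega>" by blast
          show "\<forall>s\<in>{0..t}. X s \<omega> > 0"
          proof
            fix s assume s: "s \<in> {0..t}"
            let ?r = "\<lambda>k. real_of_int \<lfloor>s * real (Suc k)\<rfloor> / real (Suc k)"
            have r: "0 \<le> ?r k \<and> ?r k \<le> t" for k
              using floor_approx_bounds[of s k] s by auto
            then have rq: "?q k \<lfloor>s * real (Suc k)\<rfloor> = ?r k" for k by simp
            have "(\<lambda>k. X (?r k) \<omega>) \<longlonglongrightarrow> X s \<omega>"
              by (rule continuous_on_tendsto_compose[OF cont[OF om] floor_approx]) (use s r in auto)
            moreover have "1 / real (Suc n) \<le> X (?r k) \<omega>" for k
              using n[where k=k and i="\<lfloor>s * real (Suc k)\<rfloor>"] rq[of k] by simp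
            ultimately have "1 / real (Suc n) \<le> X s \<omega>"
              by (intro LIMSEQ_le_const) auto
            moreover have "0 < 1 / real (Suc n)" by simp
            ultimately show "X s \<omega> > 0" by linarith
          qed
        qed
        finally show "y < ruin_time X \<omega> \<longleftrightarrow> ?P \<omega>" .
      qed
      have [measurable]: "X (?q k i) \<in> borel_measurable M" for k i using meas qin by blast
      have "{\<omega> \<in> space M. ?P \<omega>} \<in> sets M" by measurable
      then show ?thesis by (simp only: eq)
    qed
  next
    case PInf
    then have "{\<omega> \<in> space M. y < ruin_time X \<omega>} = {}" by simp
    then show ?thesis by (metis sets.empty_sets)
  next
    case MInf
    have "y < ruin_time X \<omega>" for \<omega>
    proof -
      have "y < 0" using MInf by simp
      also have "0 \<le> ruin_time X \<omega>" by (rule ruin_nonneg)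
      finally show "y < ruin_time X \<omega>" .
    qed
    then have "{\<omega> \<in> space M. y < ruin_time X \<omega>} = space M" by simp
    then show ?thesis by simp
  qed
qed



lemma exp_int:
  fixes d :: real assumes d: "d > 0"
  shows "set_integrable lborel {0..} (\<lambda>t. exp (- d * t))"
    "(LINT t:{0..}|lborel. exp (- d * t)) = 1 / d"
proof -
  have "(\<lambda>t. exp (- d * t)) absolutely_integrable_on {0..}"
    using d by (intro nonnegative_absolutely_integrable_1 integrable_on_exp_minus_to_infinity) auto
  then have "integrable lebesgue (\<lambda>t. indicat_real {0..} t *\<^sub>R exp (- d * t))"
    unfolding set_integrable_def .
  then show si: "set_integrable lborel {0..} (\<lambda>t. exp (- d * t))"
    unfolding set_integrable_def by (subst (asm) integrable_completion) auto
  have "(LINT t:{0..}|lborel. exp (- d * t)) = integral {0..} (\<lambda>t. exp (- d * t))"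
    by (rule set_borel_integral_eq_integral(2)[OF si])
  also have "\<dots> = exp (- d * 0) / d"
    by (rule integral_unique[OF has_integral_exp_minus_to_infinity[OF d]])
  finally show "(LINT t:{0..}|lborel. exp (- d * t)) = 1 / d" by simp
qed

definition Kf :: "real \<Rightarrow> ereal \<Rightarrow> real" where
  "Kf d T = (LINT t:{t. 0 \<le> t \<and> ereal t < T}|lborel. exp (- d * t))"

lemma Kf_bounds:
  assumes d: "d > 0" shows "0 \<le> Kf d T" "Kf d T \<le> 1 / d"
proof -
  have si: "set_integrable lborel {0..} (\<lambda>t. exp (- d * t))" by (rule exp_int(1)[OF d])
  have si2: "set_integrable lborel {t. 0 \<le> t \<and> ereal t < T} (\<lambda>t. exp (- d * t))"
    by (rule set_integrable_subset[OF si]) auto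
  show "0 \<le> Kf d T" unfolding Kf_def set_lebesgue_integral_def by (intro integral_nonneg_AE AE_I2) (auto split: split_indicator)
  have "Kf d T \<le> (LINT t:{0..}|lborel. exp (- d * t))"
    unfolding Kf_def set_lebesgue_integral_def
    using si si2 unfolding set_integrable_def
    by (intro integral_mono) (auto split: split_indicator)
  then show "Kf d T \<le> 1 / d" using exp_int(2)[OF d] by simp
qed

lemma Kf_meas[measurable]:
  assumes "T \<in> borel_measurable M"
  shows "(\<lambda>\<omega>. Kf d (T \<omega>)) \<in> borel_measurable M"
proof -
  have "(\<lambda>\<omega>. Kf d (T \<omega>)) = (\<lambda>\<omega>. \<integral>t. indicator {t. 0 \<le> t \<and> ereal t < T \<omega>} t *\<^sub>R exp (- d * t) \<partial>lborel)"
    unfolding Kf_def set_lebesgue_integral_def by simp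
  also have "\<dots> \<in> borel_measurable M"
    using assms by measurable
  finally show ?thesis .
qed

lemma Kf_lim:
  assumes d: "d > 0" and ev: "\<And>t0. eventually (\<lambda>n. ereal t0 < T n) sequentially"
  shows "(\<lambda>n. Kf d (T n)) \<longlonglongrightarrow> 1 / d"
proof -
  have si: "set_integrable lborel {0..} (\<lambda>t. exp (- d * t))" by (rule exp_int(1)[OF d])
  have "(\<lambda>n. \<integral>t. indicator {t. 0 \<le> t \<and> ereal t < T n} t *\<^sub>R exp (- d * t) \<partial>lborel)
        \<longlonglongrightarrow> (\<integral>t. indicator {0..} t *\<^sub>R exp (- d * t) \<partial>lborel)"
  proof (rule integral_dominated_convergence[where w="\<lambda>t. indicator {0..} t *\<^sub>R exp (- d * t)"])
    show "integrable lborel (\<lambda>t. indicator {0..} t *\<^sub>R exp (- d * t))"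
      using si unfolding set_integrable_def .
    show "(\<lambda>t. indicat_real {0..} t *\<^sub>R exp (- d * t)) \<in> borel_measurable lborel" by measurable
    show "(\<lambda>t. indicat_real {t. 0 \<le> t \<and> ereal t < T n} t *\<^sub>R exp (- d * t)) \<in> borel_measurable lborel" for n
      by measurable
    show "AE t in lborel. norm (indicat_real {t. 0 \<le> t \<and> ereal t < T n} t *\<^sub>R exp (- d * t))
       \<le> indicat_real {0..} t *\<^sub>R exp (- d * t)" for n
      by (intro AE_I2) (auto split: split_indicator)
    show "AE t in lborel. (\<lambda>n. indicat_real {t. 0 \<le> t \<and> ereal t < T n} t *\<^sub>R exp (- d * t))
       \<longlonglongrightarrow> indicat_real {0..} t *\<^sub>R exp (- d * t)"
    proof (intro AE_I2)
      fix t :: real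
      show "(\<lambda>n. indicat_real {t. 0 \<le> t \<and> ereal t < T n} t *\<^sub>R exp (- d * t))
       \<longlonglongrightarrow> indicat_real {0..} t *\<^sub>R exp (- d * t)"
      proof (cases "0 \<le> t")
        case True
        show ?thesis
          by (rule tendsto_eventually) (use ev[of t] True in \<open>auto elim!: eventually_mono\<close>)
      qed simp
    qed
  qed
  then show ?thesis
    unfolding Kf_def set_lebesgue_integral_def using exp_int(2)[OF d]
    unfolding set_lebesgue_integral_def by simp
qed

lemma disc_eq:
  assumes "0 \<le> t" shows "disc d d P t \<omega> = exp (- d * t)"
proof -
  have "(LINT s:{0..t}|lborel. d + (d - d) * P s \<omega>) = d * t"
    using assms by (simp add: set_integral_const)
  then show ?thesis unfolding disc_def by simp
qed

lemma ruin_to_inf: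
  fixes X :: "nat \<Rightarrow> real \<Rightarrow> 'w \<Rightarrow> real"
  assumes cont: "\<And>n. continuous_on {0..} (\<lambda>t. X n t \<omega>)"
    and contW: "continuous_on {0..} (\<lambda>t. W t \<omega>)"
    and low: "\<And>n t. 0 \<le> t \<Longrightarrow> x n + c * t + sig * W t \<omega> \<le> X n t \<omega>"
    and lim: "filterlim x at_top sequentially"
  shows "eventually (\<lambda>n. ereal t0 < ruin_time (X n) \<omega>) sequentially"
proof (cases "t0 < 0")
  case True
  have "ereal t0 < ruin_time (X n) \<omega>" for n
  proof -
    have "ereal t0 < 0" using True by simp
    also have "0 \<le> ruin_time (X n) \<omega>" by (rule ruin_nonneg)
    finally show ?thesis .
  qed
  then show ?thesis by simp
next
  case False
  have "\<exists>s0\<in>{0..t0}. \<forall>s\<in>{0..t0}. c * s0 + sig * W s0 \<omega> \<le> c * s + sig * W s \<omega>"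
    using False by (intro continuous_attains_inf continuous_intros continuous_on_subset[OF contW]) auto
  then obtain s0 where s0: "\<And>s. s \<in> {0..t0} \<Longrightarrow> c * s0 + sig * W s0 \<omega> \<le> c * s + sig * W s \<omega>" by blast
  have "eventually (\<lambda>n. x n > - (c * s0 + sig * W s0 \<omega>)) sequentially"
    using lim by (simp add: filterlim_at_top_dense)
  then show ?thesis
  proof (rule eventually_mono)
    fix n assume xn: "x n > - (c * s0 + sig * W s0 \<omega>)"
    have "\<forall>s\<in>{0..t0}. X n s \<omega> > 0"
    proof
      fix s assume s: "s \<in> {0..t0}"
      have "x n + c * s + sig * W s \<omega> \<le> X n s \<omega>" using low s by auto
      then show "X n s \<omega> > 0" using s0[OF s] xn by linarith
    qed
    then show "ereal t0 < ruin_time (X n) \<omega>"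
      using ruin_char[where X="X n" and \<omega>=\<omega> and t=t0, OF cont] False by simp
  qed
qed



lemma mu_lower:
  fixes mu1 mu2 q :: real assumes "q \<in> {0<..<1}"
  shows "min mu1 mu2 \<le> mu2 + (mu1 - mu2) * q"
proof (cases "mu1 \<le> mu2")
  case True
  have "(mu1 - mu2) * q \<ge> (mu1 - mu2) * 1"
    using assms True by (intro mult_left_mono_neg) auto
  then show ?thesis using True by simp
next
  case False
  then have "(mu1 - mu2) * q \<ge> 0" using assms by simp
  then show ?thesis by simp
qed

lemma comp_lower:
  assumes sol: "surplus_sol M F W mu1 mu2 sig a P \<pi> x X"
    and ctl: "control_ok a \<pi>" and a: "a > 0"
    and Prange: "\<And>\<omega> s. \<omega> \<in> space M \<Longrightarrow> 0 \<le> s \<Longrightarrow> P s \<omega> \<in> {0<..<1}"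
  shows "AE \<omega> in M. \<forall>t\<ge>0. x + min 0 (min mu1 mu2 - a) * t + sig * W t \<omega> \<le> X t \<omega>"
proof -
  let ?c = "min 0 (min mu1 mu2 - a)"
  have eq: "AE \<omega> in M. \<forall>t\<ge>0. X t \<omega> =
        x + (LINT s:{0..t}|lborel. (mu2 + (mu1 - mu2) * P s \<omega>) - bctl a \<pi> (X s \<omega>) (P s \<omega>))
          + sig * W t \<omega>"
    using sol unfolding surplus_sol_def by blast
  show ?thesis
    using eq AE_space
  proof eventually_elim
    case (elim \<omega>)
    show ?case
    proof (intro allI impI)
      fix t :: real assume t: "0 \<le> t"
      let ?h = "\<lambda>s. (mu2 + (mu1 - mu2) * P s \<omega>) - bctl a \<pi> (X s \<omega>) (P s \<omega>)"
      have "?c * t \<le> (LINT s:{0..t}|lborel. ?h s)"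
      proof (cases "set_integrable lborel {0..t} ?h")
        case True
        have ci: "set_integrable lborel {0..t} (\<lambda>s. ?c)"
          by (rule borel_integrable_atLeastAtMost') simp
        have "(LINT s:{0..t}|lborel. ?c) \<le> (LINT s:{0..t}|lborel. ?h s)"
        proof (rule set_integral_mono[OF ci True])
          fix s assume s: "s \<in> {0..t}"
          then have Ps: "P s \<omega> \<in> {0<..<1}" using Prange elim by auto
          have "bctl a \<pi> (X s \<omega>) (P s \<omega>) \<le> a" by (rule bctl_le[OF ctl Ps a])
          moreover have "min mu1 mu2 \<le> mu2 + (mu1 - mu2) * P s \<omega>" by (rule mu_lower[OF Ps])
          ultimately show "?c \<le> ?h s" by linarith
        qed
        also have "(LINT s:{0..t}|lborel. ?c) = ?c * t" using t by (simp add: set_integral_const)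
        finally show ?thesis by simp
      next
        case False
        then have "(LINT s:{0..t}|lborel. ?h s) = 0"
          unfolding set_lebesgue_integral_def set_integrable_def by (simp add: not_integrable_integral_eq)
        moreover have "?c * t \<le> 0" using t by (simp add: mult_nonpos_nonneg)
        ultimately show ?thesis by simp
      qed
      then show "x + ?c * t + sig * W t \<omega> \<le> X t \<omega>" using elim t by auto
    qed
  qed
qed

lemma sol_props:
  assumes "surplus_sol M F W mu1 mu2 sig a P \<pi> x X" "is_filtration M F"
  shows "\<And>t. 0 \<le> t \<Longrightarrow> X t \<in> borel_measurable M"
    "\<And>\<omega>. \<omega> \<in> space M \<Longrightarrow> continuous_on {0..} (\<lambda>t. X t \<omega>)"
  using assms filt_meas unfolding surplus_sol_def by blast+

lemma limit_lemma:
  fixes xs :: "nat \<Rightarrow> real"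
  assumes BM: "std_BM M F W"
    and ex: "\<And>n. \<exists>X. surplus_sol M F W mu1 mu2 sig a P \<pi> (xs n) X"
    and ctl: "control_ok a \<pi>" and a: "a > 0" and d: "d > 0"
    and Prange: "\<And>\<omega> s. \<omega> \<in> space M \<Longrightarrow> 0 \<le> s \<Longrightarrow> P s \<omega> \<in> {0<..<1}"
    and lim: "filterlim xs at_top sequentially"
  shows "(\<lambda>n. \<integral>\<omega>. c * Kf d (ruin_time (SOME X. surplus_sol M F W mu1 mu2 sig a P \<pi> (xs n) X) \<omega>) \<partial>M)
           \<longlonglongrightarrow> c / d"
proof -
  define Xn where "Xn n = (SOME X. surplus_sol M F W mu1 mu2 sig a P \<pi> (xs n) X)" for n
  have sol: "surplus_sol M F W mu1 mu2 sig a P \<pi> (xs n) (Xn n)" for n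
    unfolding Xn_def using ex[of n] by (rule someI_ex)
  have ps: "prob_space M" and filt: "is_filtration M F"
    and Wc: "\<And>\<omega>. \<omega> \<in> space M \<Longrightarrow> continuous_on {0..} (\<lambda>t. W t \<omega>)"
    using BM unfolding std_BM_def by auto
  interpret prob_space M by (rule ps)
  have Tm: "ruin_time (Xn n) \<in> borel_measurable M" for n
    by (rule ruin_meas) (use sol_props[OF sol filt] in auto)
  have low: "AE \<omega> in M. \<forall>n. \<forall>t\<ge>0. xs n + min 0 (min mu1 mu2 - a) * t + sig * W t \<omega> \<le> Xn n t \<omega>"
    unfolding AE_all_countable using comp_lower[OF sol ctl a Prange] by blast
  have "(\<lambda>n. \<integral>\<omega>. c * Kf d (ruin_time (Xn n) \<omega>) \<partial>M) \<longlonglongrightarrow> (\<integral>\<omega>. c / d \<partial>M)"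
  proof (rule integral_dominated_convergence[where w="\<lambda>_. \<bar>c\<bar> / d"])
    show "(\<lambda>\<omega>. c / d) \<in> borel_measurable M" by simp
    show "(\<lambda>\<omega>. c * Kf d (ruin_time (Xn n) \<omega>)) \<in> borel_measurable M" for n
      using Tm[of n] by measurable
    show "integrable M (\<lambda>\<omega>. \<bar>c\<bar> / d)" by simp
    show "AE \<omega> in M. norm (c * Kf d (ruin_time (Xn n) \<omega>)) \<le> \<bar>c\<bar> / d" for n
    proof (intro AE_I2)
      fix \<omega>
      have "norm (c * Kf d (ruin_time (Xn n) \<omega>)) = \<bar>c\<bar> * Kf d (ruin_time (Xn n) \<omega>)"
        using Kf_bounds(1)[OF d] by (simp add: abs_mult)
      also have "\<dots> \<le> \<bar>c\<bar> * (1 / d)" by (intro mult_left_mono Kf_bounds(2)[OF d]) auto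
      finally show "norm (c * Kf d (ruin_time (Xn n) \<omega>)) \<le> \<bar>c\<bar> / d" by simp
    qed
    show "AE \<omega> in M. (\<lambda>n. c * Kf d (ruin_time (Xn n) \<omega>)) \<longlonglongrightarrow> c / d"
      using low AE_space
    proof eventually_elim
      case (elim \<omega>)
      have "(\<lambda>n. Kf d (ruin_time (Xn n) \<omega>)) \<longlonglongrightarrow> 1 / d"
      proof (rule Kf_lim[OF d])
        fix t0
        show "\<forall>\<^sub>F n in sequentially. ereal t0 < ruin_time (Xn n) \<omega>"
          by (rule ruin_to_inf[where W=W and x=xs and c="min 0 (min mu1 mu2 - a)" and sig=sig])
             (use sol_props[OF sol filt] elim Wc lim in auto)
      qed
      then have "(\<lambda>n. c * Kf d (ruin_time (Xn n) \<omega>)) \<longlonglongrightarrow> c * (1 / d)"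
        by (intro tendsto_intros)
      then show ?case by simp
    qed
  qed
  then show ?thesis unfolding Xn_def by (simp add: prob_space)
qed



lemma Hctl_meas:
  assumes ctl: "control_ok a \<pi>"
  shows "(\<lambda>z. Hctl lam a \<pi> (fst z) (snd z)) \<in> borel_measurable (borel :: (real \<times> real) measure)"
proof -
  have pm: "(\<lambda>w. \<pi> (fst w) (fst (snd w)) (snd (snd w))) \<in> borel_measurable borel"
    using ctl unfolding control_ok_def by blast
  have sw: "(\<lambda>w::(real \<times> real) \<times> real. (snd w, fst w)) \<in> (borel \<Otimes>\<^sub>M lborel) \<rightarrow>\<^sub>M (borel :: (real \<times> real \<times> real) measure)"
  proof -
    have "(\<lambda>w::(real \<times> real) \<times> real. (snd w, fst w)) \<in> (borel \<Otimes>\<^sub>M lborel) \<rightarrow>\<^sub>M (borel \<Otimes>\<^sub>M borel)"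
      by measurable
    then show ?thesis by (simp add: borel_prod)
  qed
  have m2[measurable]: "(\<lambda>w::(real \<times> real) \<times> real. \<pi> (snd w) (fst (fst w)) (snd (fst w))) \<in> borel_measurable (borel \<Otimes>\<^sub>M lborel)"
    using measurable_compose[OF sw pm] by simp
  have eq: "(\<lambda>z. Hctl lam a \<pi> (fst z) (snd z)) = (\<lambda>z. \<integral>u. indicator {0..a} u *\<^sub>R ((u - lam * ln (\<pi> u (fst z) (snd z))) * \<pi> u (fst z) (snd z)) \<partial>lborel)"
    unfolding Hctl_def set_lebesgue_integral_def ..
  show ?thesis unfolding eq
    by (rule lborel.borel_measurable_lebesgue_integral) (simp add: case_prod_beta', measurable)
qed

lemma clamp_cont:
  fixes Y :: "real \<Rightarrow> 'b::topological_space"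
  assumes "continuous_on {0..} (\<lambda>t. Y t)"
  shows "continuous_on UNIV (\<lambda>s. Y (max 0 s))"
proof -
  have h: "continuous_on UNIV (\<lambda>s::real. max 0 s)" by (intro continuous_on_max continuous_on_const continuous_on_id)
  have c: "continuous_on {0..} Y" using assms by simp
  have i: "(\<lambda>s::real. max 0 s) ` UNIV \<subseteq> {0..}" by auto
  show ?thesis by (rule continuous_on_compose2[OF c h i])
qed

lemma upper_lemma:
  fixes X P :: "real \<Rightarrow> 'w \<Rightarrow> real" and S :: "real \<Rightarrow> real \<Rightarrow> real"
  assumes ps: "prob_space M" and filt: "is_filtration M F"
    and sol: "surplus_sol M F W mu1 mu2 sig a P \<pi> x X"
    and Pm: "\<And>s. 0 \<le> s \<Longrightarrow> P s \<in> borel_measurable M"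
    and Pc: "\<And>\<omega>. \<omega> \<in> space M \<Longrightarrow> continuous_on {0..} (\<lambda>s. P s \<omega>)"
    and Prange: "\<And>\<omega> s. \<omega> \<in> space M \<Longrightarrow> 0 \<le> s \<Longrightarrow> P s \<omega> \<in> {0<..<1}"
    and ctl: "control_ok a \<pi>"
    and gib: "\<And>y q u. 0 \<le> y \<Longrightarrow> q \<in> {0<..<1} \<Longrightarrow> u \<in> {0..a} \<Longrightarrow> \<pi> u y q = gibbs lam a u (S y q)"
    and fin: "(\<integral>\<^sup>+\<omega>. (\<integral>\<^sup>+t. indicator (alive X \<omega>) t * ennreal (disc d d P t \<omega>)
                       * Habs lam a \<pi> (X t \<omega>) (P t \<omega>) \<partial>lborel) \<partial>M) < \<top>"
    and d: "d > 0" and lam: "lam > 0" and a: "a > 0"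
  shows "(\<integral>\<omega>. (LINT t:alive X \<omega>|lborel. disc d d P t \<omega> * Hctl lam a \<pi> (X t \<omega>) (P t \<omega>)) \<partial>M)
         \<le> (\<integral>\<omega>. lam * ln (lam * (exp (a / lam) - 1)) * Kf d (ruin_time X \<omega>) \<partial>M)"
proof -
  interpret prob_space M by (rule ps)
  let ?c = "lam * ln (lam * (exp (a / lam) - 1))"
  let ?T = "ruin_time X"
  note Xm = sol_props(1)[OF sol filt] and Xc = sol_props(2)[OF sol filt]
  have Tm[measurable]: "?T \<in> borel_measurable M" by (rule ruin_meas) (use Xm Xc in auto)
  have X'm[measurable]: "(\<lambda>z. X (max 0 (snd z)) (fst z)) \<in> borel_measurable (M \<Otimes>\<^sub>M lborel)"
    by (rule joint_meas[where Q="\<lambda>s. X (max 0 s)"]) (use Xm Xc clamp_cont in auto)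
  have P'm[measurable]: "(\<lambda>z. P (max 0 (snd z)) (fst z)) \<in> borel_measurable (M \<Otimes>\<^sub>M lborel)"
    by (rule joint_meas[where Q="\<lambda>s. P (max 0 s)"]) (use Pm Pc clamp_cont in auto)
  have pair: "(\<lambda>z. (X (max 0 (snd z)) (fst z), P (max 0 (snd z)) (fst z))) \<in> (M \<Otimes>\<^sub>M lborel) \<rightarrow>\<^sub>M (borel :: (real \<times> real) measure)"
  proof -
    have "(\<lambda>z. (X (max 0 (snd z)) (fst z), P (max 0 (snd z)) (fst z))) \<in> (M \<Otimes>\<^sub>M lborel) \<rightarrow>\<^sub>M (borel \<Otimes>\<^sub>M borel)"
      by measurable
    then show ?thesis by (simp add: borel_prod)
  qed
  have HHm[measurable]: "(\<lambda>z. Hctl lam a \<pi> (X (max 0 (snd z)) (fst z)) (P (max 0 (snd z)) (fst z))) \<in> borel_measurable (M \<Otimes>\<^sub>M lborel)"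
    using measurable_compose[OF pair Hctl_meas[OF ctl]] by simp
  define F where "F \<omega> t = (if 0 \<le> t \<and> ereal t < ?T \<omega> then exp (- d * t) * Hctl lam a \<pi> (X (max 0 t) \<omega>) (P (max 0 t) \<omega>) else 0)" for \<omega> t
  have Fm[measurable]: "(\<lambda>z. F (fst z) (snd z)) \<in> borel_measurable (M \<Otimes>\<^sub>M lborel)"
    unfolding F_def by measurable
  have Fm1: "(\<lambda>t. F \<omega> t) \<in> borel_measurable lborel" if "\<omega> \<in> space M" for \<omega>
    using measurable_Pair2[OF Fm that] by simp
  have eqF: "indicator (alive X \<omega>) t *\<^sub>R (disc d d P t \<omega> * Hctl lam a \<pi> (X t \<omega>) (P t \<omega>)) = F \<omega> t" for \<omega> t
    unfolding F_def alive_def by (auto simp: disc_eq)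
  define g where "g \<omega> = (\<integral>t. F \<omega> t \<partial>lborel)" for \<omega>
  have inner: "(LINT t:alive X \<omega>|lborel. disc d d P t \<omega> * Hctl lam a \<pi> (X t \<omega>) (P t \<omega>)) = g \<omega>" for \<omega>
    unfolding set_lebesgue_integral_def g_def using eqF by simp
  have gm[measurable]: "g \<in> borel_measurable M"
    unfolding g_def by (rule lborel.borel_measurable_lebesgue_integral) (simp add: case_prod_beta')
  define G where "G \<omega> = (\<integral>\<^sup>+t. ennreal (norm (F \<omega> t)) \<partial>lborel)" for \<omega>
  have Gm: "G \<in> borel_measurable M"
    unfolding G_def by (rule lborel.borel_measurable_nn_integral) (simp add: case_prod_beta', measurable)
  have bnd: "ennreal (norm (F \<omega> t)) \<le> indicator (alive X \<omega>) t * ennreal (disc d d P t \<omega>) * Habs lam a \<pi> (X t \<omega>) (P t \<omega>)" for \<omega> t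
  proof (cases "t \<in> alive X \<omega>")
    case True
    then have t: "0 \<le> t" "ereal t < ?T \<omega>" unfolding alive_def by auto
    have "ennreal (norm (F \<omega> t)) = ennreal (exp (- d * t)) * ennreal \<bar>Hctl lam a \<pi> (X t \<omega>) (P t \<omega>)\<bar>"
      using t unfolding F_def by (simp add: abs_mult ennreal_mult)
    also have "\<dots> \<le> ennreal (exp (- d * t)) * Habs lam a \<pi> (X t \<omega>) (P t \<omega>)"
      by (intro mult_left_mono) (auto simp: Habs_def)
    finally show ?thesis using True t by (simp add: disc_eq)
  next
    case False
    then have "F \<omega> t = 0" unfolding F_def alive_def by auto
    then show ?thesis by simp
  qed
  have Gfin: "(\<integral>\<^sup>+\<omega>. G \<omega> \<partial>M) < \<top>"
  proof -
    have "(\<integral>\<^sup>+\<omega>. G \<omega> \<partial>M) \<le> (\<integral>\<^sup>+\<omega>. (\<integral>\<^sup>+t. indicator (alive X \<omega>) t * ennreal (disc d d P t \<omega>)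
                       * Habs lam a \<pi> (X t \<omega>) (P t \<omega>) \<partial>lborel) \<partial>M)"
      unfolding G_def by (intro nn_integral_mono bnd)
    then show ?thesis using fin by (simp add: order_le_less_trans)
  qed
  have AEfin: "AE \<omega> in M. G \<omega> \<noteq> \<infinity>"
    by (rule nn_integral_PInf_AE[OF Gm]) (use Gfin in simp)
  have normg: "ennreal (norm (g \<omega>)) \<le> G \<omega>" for \<omega>
  proof (cases "integrable lborel (F \<omega>)")
    case True
    then show ?thesis unfolding g_def G_def by (rule integral_norm_bound_ennreal)
  next
    case False
    then show ?thesis unfolding g_def by (simp add: not_integrable_integral_eq)
  qed
  have gint: "integrable M g"
  proof (rule integrableI_bounded[OF gm])
    have "(\<integral>\<^sup>+\<omega>. ennreal (norm (g \<omega>)) \<partial>M) \<le> (\<integral>\<^sup>+\<omega>. G \<omega> \<partial>M)"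
      by (intro nn_integral_mono normg)
    then show "(\<integral>\<^sup>+\<omega>. ennreal (norm (g \<omega>)) \<partial>M) < \<infinity>" using Gfin by (simp add: order_le_less_trans)
  qed
  have rint: "integrable M (\<lambda>\<omega>. ?c * Kf d (?T \<omega>))"
  proof (rule integrable_const_bound[where B="\<bar>?c\<bar> / d"])
    show "AE \<omega> in M. norm (?c * Kf d (?T \<omega>)) \<le> \<bar>?c\<bar> / d"
    proof (intro AE_I2)
      fix \<omega>
      have "norm (?c * Kf d (?T \<omega>)) = \<bar>?c\<bar> * Kf d (?T \<omega>)"
        using Kf_bounds(1)[OF d] by (simp add: abs_mult)
      also have "\<dots> \<le> \<bar>?c\<bar> * (1 / d)" by (intro mult_left_mono Kf_bounds(2)[OF d]) auto
      finally show "norm (?c * Kf d (?T \<omega>)) \<le> \<bar>?c\<bar> / d" by simp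
    qed
  qed measurable
  have expi: "integrable lborel (\<lambda>t. indicator {t. 0 \<le> t \<and> ereal t < ?T \<omega>} t *\<^sub>R exp (- d * t))" for \<omega>
    using set_integrable_subset[OF exp_int(1)[OF d], of "{t. 0 \<le> t \<and> ereal t < ?T \<omega>}"]
    unfolding set_integrable_def by auto
  have ae: "AE \<omega> in M. g \<omega> \<le> ?c * Kf d (?T \<omega>)"
    using AEfin AE_space
  proof eventually_elim
    case (elim \<omega>)
    have Fi: "integrable lborel (F \<omega>)"
      by (rule integrableI_bounded[OF Fm1[OF elim(2)]]) (use elim(1) in \<open>simp add: G_def less_top\<close>)
    have "g \<omega> \<le> (\<integral>t. ?c * (indicator {t. 0 \<le> t \<and> ereal t < ?T \<omega>} t *\<^sub>R exp (- d * t)) \<partial>lborel)"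
      unfolding g_def
    proof (rule integral_mono[OF Fi])
      show "integrable lborel (\<lambda>t. ?c * (indicator {t. 0 \<le> t \<and> ereal t < ?T \<omega>} t *\<^sub>R exp (- d * t)))"
        using expi by simp
      fix t
      show "F \<omega> t \<le> ?c * (indicator {t. 0 \<le> t \<and> ereal t < ?T \<omega>} t *\<^sub>R exp (- d * t))"
      proof (cases "0 \<le> t \<and> ereal t < ?T \<omega>")
        case True
        then have al: "t \<in> alive X \<omega>" unfolding alive_def by auto
        have xp: "X t \<omega> > 0" by (rule alive_pos[OF al])
        have pr: "P t \<omega> \<in> {0<..<1}" using Prange[OF elim(2)] True by auto
        have "Hctl lam a \<pi> (X t \<omega>) (P t \<omega>) \<le> ?c"
          by (rule Hctl_le[OF lam a ctl pr]) (use gib xp pr in auto)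
        then have "exp (- d * t) * Hctl lam a \<pi> (X t \<omega>) (P t \<omega>) \<le> exp (- d * t) * ?c"
          by (intro mult_left_mono) auto
        then show ?thesis using True unfolding F_def by (simp add: mult.commute)
      next
        case False
        then show ?thesis unfolding F_def by auto
      qed
    qed
    also have "\<dots> = ?c * Kf d (?T \<omega>)"
      unfolding Kf_def set_lebesgue_integral_def by simp
    finally show ?case .
  qed
  have "(\<integral>\<omega>. (LINT t:alive X \<omega>|lborel. disc d d P t \<omega> * Hctl lam a \<pi> (X t \<omega>) (P t \<omega>)) \<partial>M) = (\<integral>\<omega>. g \<omega> \<partial>M)"
    using inner by simp
  also have "\<dots> \<le> (\<integral>\<omega>. ?c * Kf d (?T \<omega>) \<partial>M)"
    by (rule integral_mono_AE[OF gint rint ae])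
  finally show ?thesis .
qed



lemma bctl_pic: "bctl a (pic lam a) y q = (LINT u:{0..a}|lborel. u * gibbs lam a u 1)"
  unfolding bctl_def pic_def ..

lemma clamp2_cont:
  fixes Y :: "real \<Rightarrow> 'b::topological_space"
  assumes "continuous_on {0..} (\<lambda>t. Y t)"
  shows "continuous_on UNIV (\<lambda>s. Y (max 0 (min t s)))"
proof -
  have h: "continuous_on UNIV (\<lambda>s::real. max 0 (min t s))" by (intro continuous_intros)
  have c: "continuous_on {0..} Y" using assms by simp
  have i: "(\<lambda>s::real. max 0 (min t s)) ` UNIV \<subseteq> {0..}" by auto
  show ?thesis by (rule continuous_on_compose2[OF c h i])
qed

lemma indef_cont:
  fixes \<phi> :: "real \<Rightarrow> real"
  assumes c: "continuous_on UNIV \<phi>"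
  shows "continuous_on {0..} (\<lambda>t. LINT s:{0..t}|lborel. \<phi> s)"
proof -
  have "continuous_on UNIV (\<lambda>t::real. LBINT s=(0::real)..t. \<phi> s)"
  proof (rule continuous_at_imp_continuous_on, intro ballI)
    fix t0 :: real
    let ?a = "- \<bar>t0\<bar> - 1" and ?b = "\<bar>t0\<bar> + 1"
    have "((\<lambda>u. LBINT y=(0::real)..u. \<phi> y) has_vector_derivative \<phi> t0) (at t0 within {?a..?b})"
      by (rule interval_integral_FTC2) (auto intro: continuous_on_subset[OF c])
    moreover have "at t0 within {?a..?b} = at t0" by (rule at_within_Icc_at) auto
    ultimately show "isCont (\<lambda>t::real. LBINT s=(0::real)..t. \<phi> s) t0"
      using has_vector_derivative_continuous by fastforce
  qed
  then have "continuous_on {0..} (\<lambda>t::real. LBINT s=(0::real)..t. \<phi> s)" by (rule continuous_on_subset) auto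
  then show ?thesis
    by (rule continuous_on_cong[THEN iffD1, rotated 2]) (auto simp: interval_integral_Icc)
qed

lemma exists_pic:
  fixes P :: "real \<Rightarrow> 'w \<Rightarrow> real"
  assumes BM: "std_BM M F W"
    and Pm: "\<And>s. 0 \<le> s \<Longrightarrow> P s \<in> borel_measurable (F s)"
    and Pc: "\<And>\<omega>. \<omega> \<in> space M \<Longrightarrow> continuous_on {0..} (\<lambda>s. P s \<omega>)"
  shows "surplus_sol M F W mu1 mu2 sig a P (pic lam a) x
     (\<lambda>t \<omega>. x + (LINT s:{0..t}|lborel. (mu2 + (mu1 - mu2) * P s \<omega>) - bctl a (pic lam a) 0 0) + sig * W t \<omega>)"
proof -
  let ?b = "bctl a (pic lam a) 0 0"
  have filt: "is_filtration M F" and Wm: "\<And>t. 0 \<le> t \<Longrightarrow> W t \<in> borel_measurable (F t)"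
    and Wc: "\<And>\<omega>. \<omega> \<in> space M \<Longrightarrow> continuous_on {0..} (\<lambda>t. W t \<omega>)"
    using BM unfolding std_BM_def by auto
  have Im: "(\<lambda>\<omega>. LINT s:{0..t}|lborel. (mu2 + (mu1 - mu2) * P s \<omega>) - ?b) \<in> borel_measurable (F t)"
    if t: "0 \<le> t" for t
  proof -
    have Qm[measurable]: "(\<lambda>z. P (max 0 (min t (snd z))) (fst z)) \<in> borel_measurable (F t \<Otimes>\<^sub>M lborel)"
    proof (rule joint_meas[where Q="\<lambda>s. P (max 0 (min t s))"])
      show "P (max 0 (min t s)) \<in> borel_measurable (F t)" for s
        by (rule filt_mono[OF filt _ Pm]) (use t in auto)
      fix \<omega> assume "\<omega> \<in> space (F t)"
      then have "\<omega> \<in> space M" using filt unfolding is_filtration_def by auto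
      then show "continuous_on UNIV (\<lambda>s. P (max 0 (min t s)) \<omega>)"
        using clamp2_cont[OF Pc] by blast
    qed
    have eq: "(LINT s:{0..t}|lborel. (mu2 + (mu1 - mu2) * P s \<omega>) - ?b)
      = (\<integral>s. indicator {0..t} s *\<^sub>R ((mu2 + (mu1 - mu2) * P (max 0 (min t s)) \<omega>) - ?b) \<partial>lborel)" for \<omega>
      unfolding set_lebesgue_integral_def
      by (intro Bochner_Integration.integral_cong) (auto split: split_indicator)
    show ?thesis unfolding eq
      by (rule lborel.borel_measurable_lebesgue_integral) (simp add: case_prod_beta', measurable)
  qed
  show ?thesis
    unfolding surplus_sol_def
  proof (intro conjI allI impI ballI)
    fix t :: real assume t: "0 \<le> t"
    have [measurable]: "W t \<in> borel_measurable (F t)" by (rule Wm[OF t])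
    have [measurable]: "(\<lambda>\<omega>. LINT s:{0..t}|lborel. (mu2 + (mu1 - mu2) * P s \<omega>) - ?b) \<in> borel_measurable (F t)"
      by (rule Im[OF t])
    show "(\<lambda>\<omega>. x + (LINT s:{0..t}|lborel. (mu2 + (mu1 - mu2) * P s \<omega>) - ?b) + sig * W t \<omega>) \<in> borel_measurable (F t)"
      by measurable
  next
    fix \<omega> assume om: "\<omega> \<in> space M"
    have "continuous_on {0..} (\<lambda>t. LINT s:{0..t}|lborel. (mu2 + (mu1 - mu2) * P (max 0 s) \<omega>) - ?b)"
      by (rule indef_cont) (use clamp_cont[OF Pc[OF om]] in \<open>auto intro!: continuous_intros\<close>)
    then have "continuous_on {0..} (\<lambda>t. LINT s:{0..t}|lborel. (mu2 + (mu1 - mu2) * P s \<omega>) - ?b)"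
    proof (rule continuous_on_cong[THEN iffD1, rotated 2])
      fix t :: real assume "t \<in> {0..}"
      show "(LINT s:{0..t}|lborel. (mu2 + (mu1 - mu2) * P (max 0 s) \<omega>) - ?b) = (LINT s:{0..t}|lborel. (mu2 + (mu1 - mu2) * P s \<omega>) - ?b)"
        by (rule set_lebesgue_integral_cong) auto
    qed simp
    then show "continuous_on {0..} (\<lambda>t. x + (LINT s:{0..t}|lborel. (mu2 + (mu1 - mu2) * P s \<omega>) - ?b) + sig * W t \<omega>)"
      using Wc[OF om] by (intro continuous_intros)
  next
    show "AE \<omega> in M. \<forall>t\<ge>0. x + (LINT s:{0..t}|lborel. (mu2 + (mu1 - mu2) * P s \<omega>) - ?b) + sig * W t \<omega> =
        x + (LINT s:{0..t}|lborel. (mu2 + (mu1 - mu2) * P s \<omega>) -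
          bctl a (pic lam a) (x + (LINT r:{0..s}|lborel. (mu2 + (mu1 - mu2) * P r \<omega>) - ?b) + sig * W s \<omega>) (P s \<omega>)) + sig * W t \<omega>"
      by (intro AE_I2) (simp only: bctl_pic simp_thms refl)
  qed
qed



lemma belief_props:
  assumes "belief_process M F W mu1 mu2 sig q12 q21 p0 P" "is_filtration M F"
  shows "\<And>s. 0 \<le> s \<Longrightarrow> P s \<in> borel_measurable (F s)"
    "\<And>s. 0 \<le> s \<Longrightarrow> P s \<in> borel_measurable M"
    "\<And>\<omega>. \<omega> \<in> space M \<Longrightarrow> continuous_on {0..} (\<lambda>s. P s \<omega>)"
    "\<And>\<omega> s. \<omega> \<in> space M \<Longrightarrow> 0 \<le> s \<Longrightarrow> P s \<omega> \<in> {0<..<1}"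
  using assms filt_meas unfolding belief_process_def by blast+

lemma Habs_pic:
  assumes "(lam::real) > 0" "a > 0"
  shows "Habs lam a (pic lam a) y q = ennreal \<bar>lam * ln (lam * (exp (a / lam) - 1))\<bar>"
  unfolding Habs_def using Hctl_pic[OF assms, of y q] by simp

lemma admissible_pic:
  assumes BM: "std_BM M F W"
    and bel: "\<forall>p0\<in>{0<..<1}. belief_process M F W mu1 mu2 sig q12 q21 p0 (Pf p0)"
    and lam: "lam > 0" and a: "a > 0" and d: "d > 0"
  shows "admissible M F W mu1 mu2 sig d d a lam Pf (pic lam a)"
  unfolding admissible_def
proof (intro conjI allI impI ballI)
  show "control_ok a (pic lam a)" by (rule control_ok_pic[OF lam a])
  fix x p :: real assume x: "0 \<le> x" and p: "p \<in> {0<..<1}"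
  let ?c = "lam * ln (lam * (exp (a / lam) - 1))"
  have ps: "prob_space M" and filt: "is_filtration M F" using BM unfolding std_BM_def by auto
  interpret prob_space M by (rule ps)
  have bp: "belief_process M F W mu1 mu2 sig q12 q21 p (Pf p)" using bel p by blast
  note PP = belief_props[OF bp filt]
  show ex: "\<exists>X. surplus_sol M F W mu1 mu2 sig a (Pf p) (pic lam a) x X"
    using exists_pic[OF BM PP(1) PP(3)] by blast
  fix X Y
  assume sX: "surplus_sol M F W mu1 mu2 sig a (Pf p) (pic lam a) x X"
    and sY: "surplus_sol M F W mu1 mu2 sig a (Pf p) (pic lam a) x Y"
  have eX: "AE \<omega> in M. \<forall>t\<ge>0. X t \<omega> = x + (LINT s:{0..t}|lborel. (mu2 + (mu1 - mu2) * Pf p s \<omega>) - (LINT u:{0..a}|lborel. u * gibbs lam a u 1)) + sig * W t \<omega>"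
    using sX unfolding surplus_sol_def by (simp only: bctl_pic)
  have eY: "AE \<omega> in M. \<forall>t\<ge>0. Y t \<omega> = x + (LINT s:{0..t}|lborel. (mu2 + (mu1 - mu2) * Pf p s \<omega>) - (LINT u:{0..a}|lborel. u * gibbs lam a u 1)) + sig * W t \<omega>"
    using sY unfolding surplus_sol_def by (simp only: bctl_pic)
  show "AE \<omega> in M. \<forall>t\<ge>0. X t \<omega> = Y t \<omega>"
    using eX eY by eventually_elim auto
next
  fix x p :: real assume x: "0 \<le> x" and p: "p \<in> {0<..<1}"
  let ?c = "lam * ln (lam * (exp (a / lam) - 1))"
  have ps: "prob_space M" using BM unfolding std_BM_def by auto
  interpret prob_space M by (rule ps)
  define X where "X = (SOME X. surplus_sol M F W mu1 mu2 sig a (Pf p) (pic lam a) x X)"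
  have si: "set_integrable lborel {0..} (\<lambda>t. exp (- d * t))" by (rule exp_int(1)[OF d])
  have ii: "integrable lborel (\<lambda>t. \<bar>?c\<bar> * (indicator {0..} t *\<^sub>R exp (- d * t)))"
    using si unfolding set_integrable_def by simp
  have inner: "(\<integral>\<^sup>+t. ennreal (\<bar>?c\<bar> * (indicator {0..} t *\<^sub>R exp (- d * t))) \<partial>lborel) = ennreal (\<bar>?c\<bar> / d)"
  proof -
    have "(\<integral>\<^sup>+t. ennreal (\<bar>?c\<bar> * (indicator {0..} t *\<^sub>R exp (- d * t))) \<partial>lborel)
        = ennreal (\<integral>t. \<bar>?c\<bar> * (indicator {0..} t *\<^sub>R exp (- d * t)) \<partial>lborel)"
      by (rule nn_integral_eq_integral[OF ii]) auto
    also have "(\<integral>t. \<bar>?c\<bar> * (indicator {0..} t *\<^sub>R exp (- d * t)) \<partial>lborel) = \<bar>?c\<bar> / d"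
      using exp_int(2)[OF d] unfolding set_lebesgue_integral_def by simp
    finally show ?thesis .
  qed
  have bnd: "indicator (alive X \<omega>) t * ennreal (disc d d (Pf p) t \<omega>) * Habs lam a (pic lam a) (X t \<omega>) (Pf p t \<omega>)
      \<le> ennreal (\<bar>?c\<bar> * (indicator {0..} t *\<^sub>R exp (- d * t)))" for \<omega> t
  proof (cases "t \<in> alive X \<omega>")
    case True
    then have t: "0 \<le> t" unfolding alive_def by auto
    have i1: "indicator (alive X \<omega>) t = (1::ennreal)" using True by simp
    have "indicator (alive X \<omega>) t * ennreal (disc d d (Pf p) t \<omega>) * Habs lam a (pic lam a) (X t \<omega>) (Pf p t \<omega>)
        = ennreal (exp (- d * t)) * ennreal \<bar>?c\<bar>"
      unfolding i1 disc_eq[OF t] Habs_pic[OF lam a] by simp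
    also have "\<dots> = ennreal (\<bar>?c\<bar> * (indicator {0..} t *\<^sub>R exp (- d * t)))"
      using t by (simp add: ennreal_mult[symmetric] mult.commute)
    finally show ?thesis by simp
  next
    case False
    then show ?thesis by simp
  qed
  have "(\<integral>\<^sup>+\<omega>. (\<integral>\<^sup>+t. indicator (alive X \<omega>) t * ennreal (disc d d (Pf p) t \<omega>)
           * Habs lam a (pic lam a) (X t \<omega>) (Pf p t \<omega>) \<partial>lborel) \<partial>M)
        \<le> (\<integral>\<^sup>+\<omega>. ennreal (\<bar>?c\<bar> / d) \<partial>M)"
  proof (rule nn_integral_mono)
    fix \<omega>
    have "(\<integral>\<^sup>+t. indicator (alive X \<omega>) t * ennreal (disc d d (Pf p) t \<omega>)
           * Habs lam a (pic lam a) (X t \<omega>) (Pf p t \<omega>) \<partial>lborel)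
        \<le> (\<integral>\<^sup>+t. ennreal (\<bar>?c\<bar> * (indicator {0..} t *\<^sub>R exp (- d * t))) \<partial>lborel)"
      by (rule nn_integral_mono) (rule bnd)
    then show "(\<integral>\<^sup>+t. indicator (alive X \<omega>) t * ennreal (disc d d (Pf p) t \<omega>)
           * Habs lam a (pic lam a) (X t \<omega>) (Pf p t \<omega>) \<partial>lborel) \<le> ennreal (\<bar>?c\<bar> / d)"
      by (simp only: inner)
  qed
  also have "\<dots> = ennreal (\<bar>?c\<bar> / d)" by (simp add: emeasure_space_1)
  also have "\<dots> < \<top>" by simp
  finally show "let X = SOME X. surplus_sol M F W mu1 mu2 sig a (Pf p) (pic lam a) x X in
         (\<integral>\<^sup>+\<omega>. (\<integral>\<^sup>+t. indicator (alive X \<omega>) t * ennreal (disc d d (Pf p) t \<omega>)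
                       * Habs lam a (pic lam a) (X t \<omega>) (Pf p t \<omega>) \<partial>lborel) \<partial>M) < \<top>"
    unfolding X_def Let_def .
qed

lemma Jobj_pic:
  assumes lam: "(lam::real) > 0" and a: "a > 0"
  shows "Jobj M F W mu1 mu2 sig d d a lam Pf (pic lam a) x p
     = (\<integral>\<omega>. lam * ln (lam * (exp (a / lam) - 1)) * Kf d (ruin_time (SOME X. surplus_sol M F W mu1 mu2 sig a (Pf p) (pic lam a) x X) \<omega>) \<partial>M)"
proof -
  let ?c = "lam * ln (lam * (exp (a / lam) - 1))"
  define X where "X = (SOME X. surplus_sol M F W mu1 mu2 sig a (Pf p) (pic lam a) x X)"
  have "(LINT t:alive X \<omega>|lborel. disc d d (Pf p) t \<omega> * Hctl lam a (pic lam a) (X t \<omega>) (Pf p t \<omega>))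
      = ?c * Kf d (ruin_time X \<omega>)" for \<omega>
  proof -
    have "(LINT t:alive X \<omega>|lborel. disc d d (Pf p) t \<omega> * Hctl lam a (pic lam a) (X t \<omega>) (Pf p t \<omega>))
      = (\<integral>t. ?c * (indicator {t. 0 \<le> t \<and> ereal t < ruin_time X \<omega>} t *\<^sub>R exp (- d * t)) \<partial>lborel)"
      unfolding set_lebesgue_integral_def
      by (intro Bochner_Integration.integral_cong)
         (auto simp: alive_def disc_eq Hctl_pic[OF lam a] split: split_indicator)
    also have "\<dots> = ?c * Kf d (ruin_time X \<omega>)"
      unfolding Kf_def set_lebesgue_integral_def by simp
    finally show ?thesis .
  qed
  then show ?thesis unfolding Jobj_def Let_def X_def by simp
qed



theorem proposition4p3:
  fixes M :: "'w measure" and F :: "real \<Rightarrow> 'w measure" and W :: "real \<Rightarrow> 'w \<Rightarrow> real"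
    and Pf :: "real \<Rightarrow> real \<Rightarrow> 'w \<Rightarrow> real"
    and mu1 mu2 sig q12 q21 d1 d2 delta a lam :: real
    and \<pi>s :: "real \<Rightarrow> real \<Rightarrow> real \<Rightarrow> real" and Vx :: "real \<Rightarrow> real \<Rightarrow> real"
  assumes "mu1 > 0" "mu2 > 0" "mu1 \<noteq> mu2" "sig > 0" "q12 > 0" "q21 > 0"
    and "delta > 0" "d1 = delta" "d2 = delta" "a > 0" "lam > 0"
    and "std_BM M F W"
    and "\<forall>p0\<in>{0<..<1}. belief_process M F W mu1 mu2 sig q12 q21 p0 (Pf p0)"
    and "admissible M F W mu1 mu2 sig d1 d2 a lam Pf \<pi>s"
    and "\<forall>x\<ge>0. \<forall>p\<in>{0<..<1}.
           value_fn M F W mu1 mu2 sig d1 d2 a lam Pf x p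
             = ereal (Jobj M F W mu1 mu2 sig d1 d2 a lam Pf \<pi>s x p)"
    and "\<forall>p\<in>{0<..<1}. \<forall>x\<ge>0.
           ((\<lambda>y. real_of_ereal (value_fn M F W mu1 mu2 sig d1 d2 a lam Pf y p))
              has_real_derivative Vx x p) (at x within {0..})"
    and "\<forall>x\<ge>0. \<forall>p\<in>{0<..<1}. \<forall>u\<in>{0..a}. \<pi>s u x p = gibbs lam a u (1 - Vx x p)"
  shows "\<forall>p\<in>{0<..<1}.
           ((\<lambda>x. real_of_ereal (value_fn M F W mu1 mu2 sig d1 d2 a lam Pf x p))
              \<longlongrightarrow> f_lam lam a 0 / delta) at_top
           \<and> f_lam lam a 0 / delta = lam * ln (lam * (exp (a / lam) - 1)) / delta"
proof -
  note d12 = assms(8,9)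
  have lam: "lam > 0" and a: "a > 0" and dl: "delta > 0" using assms by auto
  have BM: "std_BM M F W" using assms(12) .
  have bel: "\<forall>p0\<in>{0<..<1}. belief_process M F W mu1 mu2 sig q12 q21 p0 (Pf p0)" using assms(13) .
  have admS: "admissible M F W mu1 mu2 sig delta delta a lam Pf \<pi>s" using assms(14) d12 by simp
  have Veq: "\<And>x p. 0 \<le> x \<Longrightarrow> p \<in> {0<..<1} \<Longrightarrow> value_fn M F W mu1 mu2 sig delta delta a lam Pf x p
             = ereal (Jobj M F W mu1 mu2 sig delta delta a lam Pf \<pi>s x p)" using assms(15) d12 by simp
  have gibs: "\<And>y q u. 0 \<le> y \<Longrightarrow> q \<in> {0<..<1} \<Longrightarrow> u \<in> {0..a} \<Longrightarrow> \<pi>s u y q = gibbs lam a u (1 - Vx y q)"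
    using assms(17) by blast
  have ps: "prob_space M" and filt: "is_filtration M F" using BM unfolding std_BM_def by auto
  have admC: "admissible M F W mu1 mu2 sig delta delta a lam Pf (pic lam a)"
    by (rule admissible_pic[OF BM bel lam a dl])
  have ctlS: "control_ok a \<pi>s" using admS unfolding admissible_def by blast
  let ?c = "lam * ln (lam * (exp (a / lam) - 1))"
  have f0: "f_lam lam a 0 = ?c" by (simp add: f_lam_def)
  show ?thesis
  proof (intro ballI conjI)
    fix p :: real assume p: "p \<in> {0<..<1}"
    show "f_lam lam a 0 / delta = lam * ln (lam * (exp (a / lam) - 1)) / delta" by (simp add: f_lam_def)
    have bp: "belief_process M F W mu1 mu2 sig q12 q21 p (Pf p)" using bel p by blast
    note PP = belief_props[OF bp filt]
    define V where "V x = real_of_ereal (value_fn M F W mu1 mu2 sig d1 d2 a lam Pf x p)" for x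
    define XS where "XS x = (SOME X. surplus_sol M F W mu1 mu2 sig a (Pf p) \<pi>s x X)" for x
    define XC where "XC x = (SOME X. surplus_sol M F W mu1 mu2 sig a (Pf p) (pic lam a) x X)" for x
    have exS: "\<exists>X. surplus_sol M F W mu1 mu2 sig a (Pf p) \<pi>s x X" if "0 \<le> x" for x
      using admS that p unfolding admissible_def by blast
    have exC: "\<exists>X. surplus_sol M F W mu1 mu2 sig a (Pf p) (pic lam a) x X" for x
      using exists_pic[OF BM PP(1) PP(3)] by blast
    have low: "(\<integral>\<omega>. ?c * Kf delta (ruin_time (XC x) \<omega>) \<partial>M) \<le> V x" if x: "0 \<le> x" for x
    proof -
      have "ereal (Jobj M F W mu1 mu2 sig delta delta a lam Pf (pic lam a) x p)
          \<le> value_fn M F W mu1 mu2 sig delta delta a lam Pf x p"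
        unfolding value_fn_def by (rule SUP_upper) (use admC in simp)
      then have "Jobj M F W mu1 mu2 sig delta delta a lam Pf (pic lam a) x p \<le> V x"
        unfolding V_def d12 Veq[OF x p] by simp
      then show ?thesis unfolding XC_def Jobj_pic[OF lam a] .
    qed
    have up: "V x \<le> (\<integral>\<omega>. ?c * Kf delta (ruin_time (XS x) \<omega>) \<partial>M)" if x: "0 \<le> x" for x
    proof -
      have sol: "surplus_sol M F W mu1 mu2 sig a (Pf p) \<pi>s x (XS x)"
        unfolding XS_def using exS[OF x] by (rule someI_ex)
      have fin: "(\<integral>\<^sup>+\<omega>. (\<integral>\<^sup>+t. indicator (alive (XS x) \<omega>) t * ennreal (disc delta delta (Pf p) t \<omega>)
                       * Habs lam a \<pi>s (XS x t \<omega>) (Pf p t \<omega>) \<partial>lborel) \<partial>M) < \<top>"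
        using admS x p unfolding admissible_def Let_def XS_def by blast
      have "V x = Jobj M F W mu1 mu2 sig delta delta a lam Pf \<pi>s x p"
        unfolding V_def d12 Veq[OF x p] by simp
      also have "\<dots> = (\<integral>\<omega>. (LINT t:alive (XS x) \<omega>|lborel. disc delta delta (Pf p) t \<omega> * Hctl lam a \<pi>s (XS x t \<omega>) (Pf p t \<omega>)) \<partial>M)"
        unfolding Jobj_def Let_def XS_def ..
      also have "\<dots> \<le> (\<integral>\<omega>. ?c * Kf delta (ruin_time (XS x) \<omega>) \<partial>M)"
        by (rule upper_lemma[OF ps filt sol PP(2) PP(3) PP(4) ctlS gibs fin dl lam a])
      finally show ?thesis .
    qed
    have "(V \<longlongrightarrow> ?c / delta) at_top"
    proof (rule tendsto_at_topI_sequentially)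
      fix xs :: "nat \<Rightarrow> real" assume lim: "filterlim xs at_top sequentially"
      define ys where "ys n = max 0 (xs n)" for n
      have limy: "filterlim ys at_top sequentially"
        by (rule filterlim_at_top_mono[OF lim]) (auto simp: ys_def)
      have ys0: "0 \<le> ys n" for n by (simp add: ys_def)
      have L: "(\<lambda>n. \<integral>\<omega>. ?c * Kf delta (ruin_time (XC (ys n)) \<omega>) \<partial>M) \<longlonglongrightarrow> ?c / delta"
        unfolding XC_def by (rule limit_lemma[OF BM exC control_ok_pic[OF lam a] a dl PP(4) limy])
      have U: "(\<lambda>n. \<integral>\<omega>. ?c * Kf delta (ruin_time (XS (ys n)) \<omega>) \<partial>M) \<longlonglongrightarrow> ?c / delta"
        unfolding XS_def by (rule limit_lemma[OF BM exS[OF ys0] ctlS a dl PP(4) limy])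
      have e1: "eventually (\<lambda>n. (\<integral>\<omega>. ?c * Kf delta (ruin_time (XC (ys n)) \<omega>) \<partial>M) \<le> V (ys n)) sequentially"
        by (intro always_eventually allI low ys0)
      have e2: "eventually (\<lambda>n. V (ys n) \<le> (\<integral>\<omega>. ?c * Kf delta (ruin_time (XS (ys n)) \<omega>) \<partial>M)) sequentially"
        by (intro always_eventually allI up ys0)
      have Vy: "(\<lambda>n. V (ys n)) \<longlonglongrightarrow> ?c / delta"
        by (rule tendsto_sandwich[OF e1 e2 L U])
      have "eventually (\<lambda>n. 0 \<le> xs n) sequentially"
        using lim by (simp add: filterlim_at_top)
      then have "eventually (\<lambda>n. V (ys n) = V (xs n)) sequentially"
        by (rule eventually_mono) (simp add: ys_def)
      then show "(\<lambda>n. V (xs n)) \<longlonglongrightarrow> ?c / delta"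
        using Vy by (rule Lim_transform_eventually[rotated])
    qed
    then show "((\<lambda>x. real_of_ereal (value_fn M F W mu1 mu2 sig d1 d2 a lam Pf x p)) \<longlongrightarrow> f_lam lam a 0 / delta) at_top"
      unfolding f0 V_def[symmetric] .
  qed
qed


end
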